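(* Every Ehrhart fan is balanced: if $\Sigma$ is an Ehrhart fan of dimension $d$, then for every $\tau\in\Sigma(d-1)$, \[ \sum_{\sigma\in\Sigma(d),\ \tau\subseteq\sigma}u_{\sigma(1)\setminus\tau(1)}\in\mathrm{span}_\mathbb{R}(\tau), \] where $u_{\sigma(1)\setminus\tau(1)}$ denotes the primitive generator of the unique ray of $\sigma$ not in $\tau$.
   Context: $N$ is a free abelian group, $N_\mathbb{R}=N\otimes\mathbb{R}$, $M=\mathrm{Hom}(N,\mathbb{Z})$ viewed as integral linear functions. $\Sigma(k)$ denotes the set of $k$-dimensional cones of a fan $\Sigma$. A fan is unimodular if it contains the origin and for each cone the primitive ray generators $u_\rho\in N$ extend to a $\mathbb{Z}$-basis of $N$. $\mathrm{PL}(\Sigma)$: functions on $|\Sigma|$ agreeing on each cone with some element of $M$; $\underline{\mathrm{PL}}(\Sigma)$ its quotient by restrictions of elements of $M$. Courant function $\delta_\rho$: $1$ at $u_\rho$, $0$ at other ray generators. Star fan $\Sigma^\sigma$: image in $N_\mathbb{R}/\mathrm{span}(\sigma)$ (lattice $N/\mathrm{Span}_\mathbb{Z}(\sigma\cap N)$) of all cones that are faces of cones containing $\sigma$; $[f]^\sigma$ is the class of the function induced by $f-m$, $m\in M$ agreeing with $f$ on $\sigma$. A unimodular fan $\Sigma$ is Ehrhart (recursively on dimension) if (1) $\Sigma^\rho$ is Ehrhart for every ray $\rho$, and (2) there is $\chi_\Sigma:\underline{\mathrm{PL}}(\Sigma)\to\mathbb{Z}$ with $\chi_\Sigma(0)=1$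 and $\chi_\Sigma([f])=\chi_\Sigma([f-\delta_\rho])+\chi_{\Sigma^\rho}([f]^\rho)$ for all $f\in\mathrm{PL}(\Sigma)$, $\rho\in\Sigma(1)$. Zero-dimensional fans are Ehrhart with $\chi=1$. *)

theory Defs
  imports "HOL-Analysis.Analysis"
begin

text \<open>The lattice N is modelled as the integer points of real^'n, so N_R = real^'n.
A unimodular fan is represented by the set of its cones, each cone being given by the
(finite) set of primitive generators of its rays; the actual cone is cone_of S.\<close>

definition lattice_pts :: "(real^'n) set" where
  "lattice_pts = {x. \<forall>i. x $ i \<in> \<int>}"

definition cone_of :: "(real^'n) set \<Rightarrow> (real^'n) set" where
  "cone_of S = {(\<Sum>s\<in>S. c s *\<^sub>R s) | c. \<forall>s\<in>S. 0 \<le> c s}"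

definition int_basis :: "(real^'n) set \<Rightarrow> bool" where
  "int_basis B \<longleftrightarrow> finite B \<and> B \<subseteq> lattice_pts \<and> independent B \<and>
     (\<forall>x\<in>lattice_pts. \<exists>c. (\<forall>b\<in>B. c b \<in> \<int>) \<and> x = (\<Sum>b\<in>B. c b *\<^sub>R b))"

definition unimodular_fan :: "(real^'n) set set \<Rightarrow> bool" where
  "unimodular_fan F \<longleftrightarrow> finite F \<and> {} \<in> F \<and>
     (\<forall>S\<in>F. finite S \<and> (\<forall>T. T \<subseteq> S \<longrightarrow> T \<in> F) \<and> (\<exists>B. int_basis B \<and> S \<subseteq> B)) \<and>
     (\<forall>S\<in>F. \<forall>T\<in>F. cone_of S \<inter> cone_of T = cone_of (S \<inter> T))"

definition fan_dim :: "(real^'n) set set \<Rightarrow> nat" where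
  "fan_dim F = Max (card ` F)"

text \<open>Integral linear functions on the quotient lattice N/Span_Z(sigma), i.e. elements
of M vanishing on sigma.\<close>
definition int_lin :: "(real^'n) set \<Rightarrow> (real^'n \<Rightarrow> real) \<Rightarrow> bool" where
  "int_lin \<sigma> m \<longleftrightarrow> linear m \<and> (\<forall>x\<in>lattice_pts. m x \<in> \<int>) \<and> (\<forall>v\<in>\<sigma>. m v = 0)"

text \<open>Functions on the support of the star fan F^sigma are represented by their
pullbacks to the union of the cones of F containing sigma (which maps onto |F^sigma|).\<close>
definition star_supp :: "(real^'n) set set \<Rightarrow> (real^'n) set \<Rightarrow> (real^'n) set" where
  "star_supp F \<sigma> = \<Union> (cone_of ` {\<tau>\<in>F. \<sigma> \<subseteq> \<tau>})"

definition PL :: "(real^'n) set set \<Rightarrow> (real^'n) set \<Rightarrow> (real^'n \<Rightarrow> real) set" where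
  "PL F \<sigma> = {f. (\<forall>x. x \<notin> star_supp F \<sigma> \<longrightarrow> f x = 0) \<and>
     (\<forall>\<tau>\<in>F. \<sigma> \<subseteq> \<tau> \<longrightarrow> (\<exists>m. int_lin \<sigma> m \<and> (\<forall>x\<in>cone_of \<tau>. f x = m x)))}"

text \<open>f and g have the same class in PL-bar(F^sigma).\<close>
definition lin_equiv :: "(real^'n) set set \<Rightarrow> (real^'n) set \<Rightarrow> (real^'n \<Rightarrow> real) \<Rightarrow> (real^'n \<Rightarrow> real) \<Rightarrow> bool" where
  "lin_equiv F \<sigma> f g \<longleftrightarrow> (\<exists>m. int_lin \<sigma> m \<and> (\<forall>x\<in>star_supp F \<sigma>. f x - g x = m x))"

text \<open>Rays of the star fan F^sigma (given by representatives of their primitive generators).\<close>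
definition star_rays :: "(real^'n) set set \<Rightarrow> (real^'n) set \<Rightarrow> (real^'n) set" where
  "star_rays F \<sigma> = {u. u \<notin> \<sigma> \<and> insert u \<sigma> \<in> F}"

definition courant :: "(real^'n) set set \<Rightarrow> (real^'n) set \<Rightarrow> real^'n \<Rightarrow> (real^'n \<Rightarrow> real)" where
  "courant F \<sigma> u = (THE f. f \<in> PL F \<sigma> \<and> f u = 1 \<and> (\<forall>v\<in>star_rays F \<sigma> - {u}. f v = 0))"

text \<open>[f]^u, given m integral linear (on the quotient by sigma) agreeing with f at u:
the function induced by f - m on the star of u in F^sigma, i.e. on F^(sigma + u).\<close>
definition star_class :: "(real^'n) set set \<Rightarrow> (real^'n) set \<Rightarrow> real^'n \<Rightarrow> (real^'n \<Rightarrow> real) \<Rightarrow> (real^'n \<Rightarrow> real) \<Rightarrow> (real^'n \<Rightarrow> real)" where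
  "star_class F \<sigma> u f m = (\<lambda>x. if x \<in> star_supp F (insert u \<sigma>) then f x - m x else 0)"

text \<open>X sigma is an admissible chi for the star fan F^sigma, relative to the chosen
chi's X (sigma + u) of its star fans.\<close>
definition chi_ok :: "(real^'n) set set \<Rightarrow> ((real^'n) set \<Rightarrow> (real^'n \<Rightarrow> real) \<Rightarrow> int) \<Rightarrow> (real^'n) set \<Rightarrow> bool" where
  "chi_ok F X \<sigma> \<longleftrightarrow>
     X \<sigma> (\<lambda>_. 0) = 1 \<and>
     (\<forall>f\<in>PL F \<sigma>. \<forall>g\<in>PL F \<sigma>. lin_equiv F \<sigma> f g \<longrightarrow> X \<sigma> f = X \<sigma> g) \<and>
     (\<forall>f\<in>PL F \<sigma>. \<forall>u\<in>star_rays F \<sigma>. \<forall>m. int_lin \<sigma> m \<and> m u = f u \<longrightarrow>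
        X \<sigma> f = X \<sigma> (\<lambda>x. f x - courant F \<sigma> u x) + X (insert u \<sigma>) (star_class F \<sigma> u f m))"

text \<open>Ehrhart fan: unfolding the recursive definition, every star fan F^sigma
(sigma in F; F^{} = F, and (F^sigma)^u = F^(sigma+u)) carries a chi compatible with
the chi's of its own star fans.\<close>
definition ehrhart_fan :: "(real^'n) set set \<Rightarrow> bool" where
  "ehrhart_fan F \<longleftrightarrow> unimodular_fan F \<and> (\<exists>X. \<forall>\<sigma>\<in>F. chi_ok F X \<sigma>)"

end

theory Submission
  imports Defs
begin

lemma lin_zero_span:
  fixes \<phi> :: "real^'n \<Rightarrow> real"
  assumes "linear \<phi>" "\<forall>s\<in>S. \<phi> s = 0" "x \<in> span S"
  shows "\<phi> x = 0"
  by (rule linear_eq_0_on_span[OF assms(1)]) (use assms in auto)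

lemma cone_sub_span: "cone_of S \<subseteq> span S"
proof
  fix x assume "x \<in> cone_of S"
  then obtain c where "x = (\<Sum>s\<in>S. c s *\<^sub>R s)" by (auto simp: cone_of_def)
  then show "x \<in> span S"
    apply simp apply (rule span_sum) apply (rule span_scale) apply (rule span_base) by simp
qed

lemma gen_in_cone: assumes "finite S" "s \<in> S" shows "s \<in> cone_of S"
proof -
  have "(\<Sum>t\<in>S. (if t = s then 1 else 0) *\<^sub>R t) = s"
  proof -
    have "(\<Sum>t\<in>S. (if t = s then 1 else 0) *\<^sub>R t) = (\<Sum>t\<in>S. if t = s then t else 0)"
      by (rule sum.cong) auto
    then show ?thesis using assms by simp
  qed
  then show ?thesis unfolding cone_of_def
    by (auto intro!: exI[of _ "\<lambda>t. if t = s then 1 else 0"])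
qed

lemma dual_fun:
  assumes "int_basis B" "b0 \<in> B"
  shows "\<exists>\<phi>::real^'n \<Rightarrow> real. linear \<phi> \<and> (\<forall>x\<in>lattice_pts. \<phi> x \<in> \<int>) \<and> \<phi> b0 = 1 \<and> (\<forall>b\<in>B. b \<noteq> b0 \<longrightarrow> \<phi> b = 0)"
proof -
  have fin: "finite B" and ind: "independent B" and lat: "\<forall>x\<in>lattice_pts. \<exists>c. (\<forall>b\<in>B. c b \<in> \<int>) \<and> x = (\<Sum>b\<in>B. c b *\<^sub>R b)"
    using assms(1) unfolding int_basis_def by auto
  obtain \<phi> :: "real^'n \<Rightarrow> real" where lp: "linear \<phi>" and v: "\<forall>x\<in>B. \<phi> x = (if x = b0 then 1 else 0)"
    using linear_independent_extend[OF ind, of "\<lambda>x. if x = b0 then 1 else 0"] by blast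
  have "\<phi> x \<in> \<int>" if xl: "x \<in> lattice_pts" for x
  proof -
    obtain c where c: "\<forall>b\<in>B. c b \<in> \<int>" "x = (\<Sum>b\<in>B. c b *\<^sub>R b)" using lat xl by blast
    have "\<phi> x = (\<Sum>b\<in>B. c b * \<phi> b)" using c(2) lp by (simp add: linear_sum linear_scale)
    also have "\<dots> = (\<Sum>b\<in>B. if b = b0 then c b else 0)" using v by (intro sum.cong) auto
    also have "\<dots> = c b0" using fin assms(2) by simp
    finally show ?thesis using c(1) assms(2) by simp
  qed
  then show ?thesis using lp v assms(2) by (auto intro!: exI[of _ \<phi>])
qed

lemma span_B_univ:
  assumes "int_basis B"
  shows "span B = (UNIV :: (real^'n) set)"
proof -
  have "lattice_pts \<subseteq> span B"
  proof
    fix x :: "real^'n" assume "x \<in> lattice_pts"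
    then obtain c where "x = (\<Sum>b\<in>B. c b *\<^sub>R b)" using assms unfolding int_basis_def by blast
    then show "x \<in> span B"
      apply simp apply (rule span_sum) apply (rule span_scale) apply (rule span_base) by simp
  qed
  moreover have "(Basis :: (real^'n) set) \<subseteq> lattice_pts"
    unfolding lattice_pts_def Basis_vec_def by (auto simp: axis_def)
  ultimately have "span (Basis :: (real^'n) set) \<subseteq> span B"
    by (meson order_trans span_minimal subspace_span)
  then show ?thesis by (simp add: span_Basis top.extremum_unique)
qed

lemma span_criterion:
  fixes w :: "real^'n"
  assumes "int_basis B" "\<tau> \<subseteq> B" "\<forall>m. int_lin \<tau> m \<longrightarrow> m w = 0"
  shows "w \<in> span \<tau>"
proof -
  have fin: "finite B" using assms(1) int_basis_def by blast
  have "w \<in> span B" using span_B_univ[OF assms(1)] by simp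
  then obtain c where c: "w = (\<Sum>b\<in>B. c b *\<^sub>R b)" using span_finite[OF fin] by auto
  have z: "c b0 = 0" if b0B: "b0 \<in> B - \<tau>" for b0
  proof -
    obtain \<phi> :: "real^'n \<Rightarrow> real" where p: "linear \<phi>" "\<forall>x\<in>lattice_pts. \<phi> x \<in> \<int>" "\<phi> b0 = 1" "\<forall>b\<in>B. b \<noteq> b0 \<longrightarrow> \<phi> b = 0"
      using dual_fun[OF assms(1) DiffD1[OF b0B]] by blast
    have "int_lin \<tau> \<phi>" unfolding int_lin_def using p assms(2) b0B by auto
    then have "\<phi> w = 0" using assms(3) by blast
    moreover have "\<phi> w = (\<Sum>b\<in>B. c b * \<phi> b)" using c p(1) by (simp add: linear_sum linear_scale)
    moreover have "\<dots> = (\<Sum>b\<in>B. if b = b0 then c b else 0)" using p by (intro sum.cong) auto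
    moreover have "\<dots> = c b0" using fin b0B by simp
    ultimately show ?thesis by simp
  qed
  have "w = (\<Sum>b\<in>\<tau>. c b *\<^sub>R b)" unfolding c
    using fin assms(2) z by (intro sum.mono_neutral_right) auto
  then show ?thesis
    apply simp apply (rule span_sum) apply (rule span_scale) apply (rule span_base) by simp
qed

lemma int_lin_comb:
  assumes "int_lin \<sigma> m1" "int_lin \<sigma> m2"
  shows "int_lin \<sigma> (\<lambda>x. m1 x + of_int k * m2 x)"
proof -
  have l1: "linear m1" and l2: "linear m2" using assms int_lin_def by auto
  have "linear (\<lambda>x. m1 x + of_int k * m2 x)"
    by (rule linearI) (simp_all add: linear_add[OF l1] linear_add[OF l2] linear_scale[OF l1] linear_scale[OF l2] algebra_simps)
  then show ?thesis using assms unfolding int_lin_def by auto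
qed

lemma int_lin_zero: "int_lin \<sigma> (\<lambda>x. 0)"
  unfolding int_lin_def by (auto intro: linearI)

lemma PL_zero: "(\<lambda>x. 0) \<in> PL F \<sigma>"
  unfolding PL_def using int_lin_zero by fastforce

lemma PL_comb:
  assumes "g \<in> PL F \<sigma>" "h \<in> PL F \<sigma>"
  shows "(\<lambda>x. g x + of_int k * h x) \<in> PL F \<sigma>"
proof -
  have "\<exists>m. int_lin \<sigma> m \<and> (\<forall>x\<in>cone_of \<tau>. g x + of_int k * h x = m x)" if tF: "\<tau> \<in> F" "\<sigma> \<subseteq> \<tau>" for \<tau>
  proof -
    obtain m1 where "int_lin \<sigma> m1" "\<forall>x\<in>cone_of \<tau>. g x = m1 x" using assms(1) tF unfolding PL_def by blast
    moreover obtain m2 where "int_lin \<sigma> m2" "\<forall>x\<in>cone_of \<tau>. h x = m2 x" using assms(2) tF unfolding PL_def by blast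
    ultimately show ?thesis using int_lin_comb by fastforce
  qed
  then show ?thesis using assms unfolding PL_def by auto
qed

locale setting =
  fixes F :: "(real^'n) set set" and d :: nat and \<tau> :: "(real^'n) set"
    and X :: "(real^'n) set \<Rightarrow> (real^'n \<Rightarrow> real) \<Rightarrow> int"
  assumes uf: "unimodular_fan F" and dim: "fan_dim F = d" and tauF: "\<tau> \<in> F" and ctau: "card \<tau> + 1 = d"
    and chi: "\<forall>\<sigma>\<in>F. chi_ok F X \<sigma>"
begin

lemma finF: "finite F" using uf unfolding unimodular_fan_def by blast
lemma faces: "S \<in> F \<Longrightarrow> T \<subseteq> S \<Longrightarrow> T \<in> F" using uf unfolding unimodular_fan_def by blast
lemma finS: "S \<in> F \<Longrightarrow> finite S" using uf unfolding unimodular_fan_def by blast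
lemma basis: "S \<in> F \<Longrightarrow> \<exists>B. int_basis B \<and> S \<subseteq> B" using uf unfolding unimodular_fan_def by blast
lemma inter: "S \<in> F \<Longrightarrow> T \<in> F \<Longrightarrow> cone_of S \<inter> cone_of T = cone_of (S \<inter> T)"
  using uf unfolding unimodular_fan_def by blast
lemma card_le: "S \<in> F \<Longrightarrow> card S \<le> d"
  using dim finF unfolding fan_dim_def by auto

abbreviation "R \<equiv> star_rays F \<tau>"

lemma RD: "u \<in> R \<Longrightarrow> u \<notin> \<tau> \<and> insert u \<tau> \<in> F" unfolding star_rays_def by auto

lemma finT: "finite \<tau>" using finS tauF .

lemma ray_card: "u \<in> R \<Longrightarrow> card (insert u \<tau>) = d"
  using RD finT ctau by auto

lemma max_eq: "u \<in> R \<Longrightarrow> \<rho> \<in> F \<Longrightarrow> insert u \<tau> \<subseteq> \<rho> \<Longrightarrow> \<rho> = insert u \<tau>"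
proof -
  assume a: "u \<in> R" "\<rho> \<in> F" "insert u \<tau> \<subseteq> \<rho>"
  have "finite \<rho>" using finS a(2) .
  moreover have "card \<rho> \<le> card (insert u \<tau>)" using card_le[OF a(2)] ray_card[OF a(1)] by simp
  ultimately show ?thesis using card_seteq a(3) by blast
qed

lemma cone_supp: "u \<in> R \<Longrightarrow> cone_of (insert u \<tau>) \<subseteq> star_supp F \<tau>"
  unfolding star_supp_def using RD by blast

lemma u_in_supp: "u \<in> R \<Longrightarrow> u \<in> cone_of (insert u \<tau>)"
  using gen_in_cone RD finS by blast

lemma PL_tau_zero: "g \<in> PL F \<tau> \<Longrightarrow> s \<in> \<tau> \<Longrightarrow> g s = 0"
proof -
  assume g: "g \<in> PL F \<tau>" and s: "s \<in> \<tau>"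
  obtain m where "int_lin \<tau> m" "\<forall>x\<in>cone_of \<tau>. g x = m x" using g tauF unfolding PL_def by blast
  then show "g s = 0" using s gen_in_cone[OF finT s] unfolding int_lin_def by auto
qed

lemma L_uniq:
  assumes g: "g \<in> PL F \<tau>" and h: "h \<in> PL F \<tau>" and eq: "\<forall>v\<in>R. g v = h v"
  shows "g = h"
proof
  fix x
  show "g x = h x"
  proof (cases "x \<in> star_supp F \<tau>")
    case False then show ?thesis using g h unfolding PL_def by auto
  next
    case True
    then obtain \<sigma> where \<sigma>: "\<sigma> \<in> F" "\<tau> \<subseteq> \<sigma>" "x \<in> cone_of \<sigma>" unfolding star_supp_def by blast
    obtain m1 where m1: "int_lin \<tau> m1" "\<forall>x\<in>cone_of \<sigma>. g x = m1 x" using g \<sigma> unfolding PL_def by blast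
    obtain m2 where m2: "int_lin \<tau> m2" "\<forall>x\<in>cone_of \<sigma>. h x = m2 x" using h \<sigma> unfolding PL_def by blast
    have lin: "linear (\<lambda>x. m1 x - m2 x)" using m1 m2 unfolding int_lin_def
      by (simp add: linear_compose_sub)
    have "m1 s - m2 s = 0" if s: "s \<in> \<sigma>" for s
    proof (cases "s \<in> \<tau>")
      case True then show ?thesis using m1 m2 unfolding int_lin_def by auto
    next
      case False
      have "insert s \<tau> \<in> F" using faces[OF \<sigma>(1)] \<sigma>(2) s by auto
      then have "s \<in> R" using False unfolding star_rays_def by auto
      moreover have "s \<in> cone_of \<sigma>" using gen_in_cone finS \<sigma>(1) s by blast
      ultimately show ?thesis using eq m1 m2 by auto
    qed
    then have "m1 x - m2 x = 0"
      using lin_zero_span[OF lin] cone_sub_span \<sigma>(3) by blast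
    then show ?thesis using m1 m2 \<sigma>(3) by auto
  qed
qed


lemma phi_cone_zero:
  assumes "linear \<phi>" "\<forall>s\<in>\<tau>. \<phi> s = (0::real)" "x \<in> cone_of \<tau>"
  shows "\<phi> x = 0"
  using lin_zero_span[OF assms(1,2)] cone_sub_span assms(3) by blast

lemma delta_ex:
  assumes uR: "u \<in> R"
  shows "\<exists>\<delta>. \<delta> \<in> PL F \<tau> \<and> \<delta> u = 1 \<and> (\<forall>v\<in>R-{u}. \<delta> v = 0)"
proof -
  have uF: "insert u \<tau> \<in> F" and unt: "u \<notin> \<tau>" using RD[OF uR] by auto
  obtain B where B: "int_basis B" "insert u \<tau> \<subseteq> B" using basis[OF uF] by blast
  obtain \<phi> :: "real^'n \<Rightarrow> real" where p: "linear \<phi>" "\<forall>x\<in>lattice_pts. \<phi> x \<in> \<int>" "\<phi> u = 1" "\<forall>b\<in>B. b \<noteq> u \<longrightarrow> \<phi> b = 0"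
    using dual_fun[OF B(1), of u] B(2) by auto
  have vt: "\<forall>s\<in>\<tau>. \<phi> s = 0" using p(4) B(2) unt by auto
  have phil: "int_lin \<tau> \<phi>" unfolding int_lin_def using p vt by auto
  define \<delta> where "\<delta> x = (if x \<in> cone_of (insert u \<tau>) then \<phi> x else 0)" for x
  have van: "\<phi> x = 0" if "x \<in> cone_of \<tau>" for x using phi_cone_zero[OF p(1) vt that] .
  have PLd: "\<delta> \<in> PL F \<tau>"
    unfolding PL_def
  proof (intro CollectI conjI allI impI ballI)
    fix x assume "x \<notin> star_supp F \<tau>" then show "\<delta> x = 0" using cone_supp[OF uR] unfolding \<delta>_def by auto
  next
    fix \<sigma> assume \<sigma>: "\<sigma> \<in> F" "\<tau> \<subseteq> \<sigma>"
    show "\<exists>m. int_lin \<tau> m \<and> (\<forall>x\<in>cone_of \<sigma>. \<delta> x = m x)"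
    proof (cases "u \<in> \<sigma>")
      case True
      then have "\<sigma> = insert u \<tau>" using max_eq[OF uR \<sigma>(1)] \<sigma>(2) by auto
      then show ?thesis using phil unfolding \<delta>_def by auto
    next
      case False
      have "\<sigma> \<inter> insert u \<tau> = \<tau>" using False \<sigma>(2) by auto
      then have "cone_of \<sigma> \<inter> cone_of (insert u \<tau>) = cone_of \<tau>" using inter[OF \<sigma>(1) uF] by simp
      then have "\<forall>x\<in>cone_of \<sigma>. \<delta> x = 0" unfolding \<delta>_def using van by auto
      then show ?thesis using int_lin_zero by fastforce
    qed
  qed
  have "\<delta> u = 1" using u_in_supp[OF uR] p(3) unfolding \<delta>_def by auto
  moreover have "\<delta> v = 0" if vR: "v \<in> R - {u}" for v
  proof -
    have vF: "insert v \<tau> \<in> F" and vnt: "v \<notin> \<tau>" and vu: "v \<noteq> u" using RD vR by auto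
    have "insert v \<tau> \<inter> insert u \<tau> = \<tau>" using vnt unt vu by auto
    then have "cone_of (insert v \<tau>) \<inter> cone_of (insert u \<tau>) = cone_of \<tau>" using inter[OF vF uF] by simp
    moreover have "v \<in> cone_of (insert v \<tau>)" using u_in_supp vR by auto
    ultimately show ?thesis unfolding \<delta>_def using van by auto
  qed
  ultimately show ?thesis using PLd by blast
qed

lemma courant_props:
  assumes uR: "u \<in> R"
  shows "courant F \<tau> u \<in> PL F \<tau> \<and> courant F \<tau> u u = 1 \<and> (\<forall>v\<in>R-{u}. courant F \<tau> u v = 0)"
proof -
  let ?P = "\<lambda>f. f \<in> PL F \<tau> \<and> f u = 1 \<and> (\<forall>v\<in>R - {u}. f v = 0)"
  have "\<exists>!f. ?P f"
  proof -
    obtain \<delta> where d: "?P \<delta>" using delta_ex[OF uR] by blast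
    have "g = \<delta>" if "?P g" for g
    proof (rule L_uniq)
      show "g \<in> PL F \<tau>" "\<delta> \<in> PL F \<tau>" using that d by auto
      show "\<forall>v\<in>R. g v = \<delta> v"
      proof
        fix v assume "v \<in> R" then show "g v = \<delta> v" using that d by (cases "v = u") auto
      qed
    qed
    then show ?thesis using d by blast
  qed
  then have "?P (THE f. ?P f)" by (rule theI')
  then show ?thesis unfolding courant_def .
qed

lemma step:
  assumes f: "f \<in> PL F \<tau>" and uR: "u \<in> R"
  shows "X \<tau> f = X \<tau> (\<lambda>x. f x - courant F \<tau> u x) + 1"
proof -
  have uF: "insert u \<tau> \<in> F" using RD[OF uR] by auto
  obtain m where m: "int_lin \<tau> m" "\<forall>x\<in>cone_of (insert u \<tau>). f x = m x"
    using f uF unfolding PL_def by blast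
  have mu: "m u = f u" using m(2) u_in_supp[OF uR] by auto
  have "X \<tau> f = X \<tau> (\<lambda>x. f x - courant F \<tau> u x) + X (insert u \<tau>) (star_class F \<tau> u f m)"
    using chi tauF f uR m(1) mu unfolding chi_ok_def by blast
  moreover have "star_class F \<tau> u f m = (\<lambda>x. 0)"
  proof
    fix x
    show "star_class F \<tau> u f m x = 0"
    proof (cases "x \<in> star_supp F (insert u \<tau>)")
      case True
      then obtain \<rho> where "\<rho> \<in> F" "insert u \<tau> \<subseteq> \<rho>" "x \<in> cone_of \<rho>" unfolding star_supp_def by blast
      then have "x \<in> cone_of (insert u \<tau>)" using max_eq[OF uR] by blast
      then show ?thesis using m(2) True unfolding star_class_def by auto
    qed (simp add: star_class_def)
  qed
  moreover have "X (insert u \<tau>) (\<lambda>x. 0) = 1" using chi uF unfolding chi_ok_def by blast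
  ultimately show ?thesis by simp
qed

lemma shift:
  assumes g: "g \<in> PL F \<tau>" and uR: "u \<in> R"
  shows "X \<tau> (\<lambda>x. g x + of_int k * courant F \<tau> u x) = X \<tau> g + k"
proof -
  let ?D = "courant F \<tau> u"
  have D: "?D \<in> PL F \<tau>" using courant_props[OF uR] by blast
  have pos: "X \<tau> (\<lambda>x. g x + of_int (int n) * ?D x) = X \<tau> g + int n" for n
  proof (induction n)
    case 0 then show ?case by simp
  next
    case (Suc n)
    let ?f = "\<lambda>x. g x + of_int (int (Suc n)) * ?D x"
    have "?f \<in> PL F \<tau>" using PL_comb[OF g D] .
    then have "X \<tau> ?f = X \<tau> (\<lambda>x. ?f x - ?D x) + 1" using step uR by blast
    moreover have "(\<lambda>x. ?f x - ?D x) = (\<lambda>x. g x + of_int (int n) * ?D x)"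
      by (rule ext) (simp add: algebra_simps)
    ultimately show ?case using Suc by simp
  qed
  have neg: "X \<tau> (\<lambda>x. g x + of_int (- int n) * ?D x) = X \<tau> g - int n" for n
  proof (induction n)
    case 0 then show ?case by simp
  next
    case (Suc n)
    let ?f = "\<lambda>x. g x + of_int (- int n) * ?D x"
    have "?f \<in> PL F \<tau>" using PL_comb[OF g D] .
    then have "X \<tau> ?f = X \<tau> (\<lambda>x. ?f x - ?D x) + 1" using step uR by blast
    moreover have "(\<lambda>x. ?f x - ?D x) = (\<lambda>x. g x + of_int (- int (Suc n)) * ?D x)"
      by (rule ext) (simp add: algebra_simps)
    ultimately show ?case using Suc by simp
  qed
  show ?thesis
  proof (cases "k \<ge> 0")
    case True
    then obtain n where "k = int n" using nonneg_int_cases by blast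
    then show ?thesis using pos by simp
  next
    case False
    then have "k = - int (nat (- k))" by simp
    then obtain n where "k = - int n" by blast
    then show ?thesis using neg by simp
  qed
qed

lemma G_lemma:
  assumes "finite A" "A \<subseteq> R"
  shows "(\<lambda>x. \<Sum>u\<in>A. of_int (k u) * courant F \<tau> u x) \<in> PL F \<tau> \<and>
         X \<tau> (\<lambda>x. \<Sum>u\<in>A. of_int (k u) * courant F \<tau> u x) = 1 + sum k A"
  using assms
proof (induction A rule: finite_induct)
  case empty
  then show ?case using PL_zero chi tauF unfolding chi_ok_def by auto
next
  case (insert u A)
  let ?G = "\<lambda>x. \<Sum>u\<in>A. of_int (k u) * courant F \<tau> u x"
  have uR: "u \<in> R" using insert by auto
  have IH: "?G \<in> PL F \<tau>" "X \<tau> ?G = 1 + sum k A" using insert by auto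
  have eq: "(\<lambda>x. \<Sum>u\<in>insert u A. of_int (k u) * courant F \<tau> u x) = (\<lambda>x. ?G x + of_int (k u) * courant F \<tau> u x)"
    using insert(1,2) by (simp add: algebra_simps)
  show ?case unfolding eq
    using PL_comb[OF IH(1) conjunct1[OF courant_props[OF uR]]] shift[OF IH(1) uR] IH(2) insert(1,2)
    by simp
qed

lemma finR: "finite R"
proof -
  have "R \<subseteq> \<Union> F" using RD by blast
  moreover have "finite (\<Union> F)" using finF finS by blast
  ultimately show ?thesis by (rule finite_subset)
qed

lemma R_int: "u \<in> R \<Longrightarrow> u \<in> lattice_pts"
proof -
  assume uR: "u \<in> R"
  obtain B where "int_basis B" "insert u \<tau> \<subseteq> B" using basis RD[OF uR] by blast
  then show ?thesis unfolding int_basis_def by auto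
qed

lemma sum_m_zero:
  assumes m: "int_lin \<tau> m"
  shows "m (\<Sum>R) = 0"
proof -
  define k where "k u = \<lfloor>m u\<rfloor>" for u
  have mk: "of_int (k u) = m u" if "u \<in> R" for u
  proof -
    have "m u \<in> \<int>" using m R_int[OF that] unfolding int_lin_def by auto
    then obtain z where "m u = of_int z" by (rule Ints_cases)
    then show ?thesis unfolding k_def by simp
  qed
  define fm where "fm x = (if x \<in> star_supp F \<tau> then m x else 0)" for x
  have fmPL: "fm \<in> PL F \<tau>" unfolding PL_def fm_def star_supp_def using m by fastforce
  have "lin_equiv F \<tau> fm (\<lambda>x. 0)" unfolding lin_equiv_def fm_def using m by auto
  moreover have "chi_ok F X \<tau>" using chi tauF by blast
  ultimately have "X \<tau> fm = X \<tau> (\<lambda>x. 0)" using fmPL PL_zero unfolding chi_ok_def by blast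
  also have "\<dots> = 1" using \<open>chi_ok F X \<tau>\<close> unfolding chi_ok_def by blast
  finally have X1: "X \<tau> fm = 1" .
  let ?G = "\<lambda>x. \<Sum>u\<in>R. of_int (k u) * courant F \<tau> u x"
  have G: "?G \<in> PL F \<tau>" "X \<tau> ?G = 1 + sum k R" using G_lemma[OF finR] by auto
  have "fm = ?G"
  proof (rule L_uniq[OF fmPL G(1)], rule ballI)
    fix v assume vR: "v \<in> R"
    have "fm v = m v" using u_in_supp[OF vR] cone_supp[OF vR] unfolding fm_def by auto
    moreover have "?G v = (\<Sum>u\<in>R. if u = v then of_int (k v) else 0)"
      by (rule sum.cong) (use courant_props vR in auto)
    moreover have "\<dots> = of_int (k v)" using finR vR by simp
    ultimately show "fm v = ?G v" using mk[OF vR] by simp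
  qed
  then have "sum k R = 0" using X1 G(2) by simp
  moreover have "(\<Sum>u\<in>R. m u) = (\<Sum>u\<in>R. of_int (k u))" using mk by (intro sum.cong) auto
  ultimately have "(\<Sum>u\<in>R. m u) = 0" by (simp add: of_int_sum[symmetric])
  moreover have "m (\<Sum>R) = (\<Sum>u\<in>R. m u)" using m unfolding int_lin_def by (simp add: linear_sum)
  ultimately show ?thesis by simp
qed

lemma main: "(\<Sum>\<sigma>\<in>{\<sigma>\<in>F. card \<sigma> = d \<and> \<tau> \<subseteq> \<sigma>}. the_elem (\<sigma> - \<tau>)) \<in> span \<tau>"
proof -
  have seq: "{\<sigma>\<in>F. card \<sigma> = d \<and> \<tau> \<subseteq> \<sigma>} = (\<lambda>u. insert u \<tau>) ` R"
  proof
    show "{\<sigma>\<in>F. card \<sigma> = d \<and> \<tau> \<subseteq> \<sigma>} \<subseteq> (\<lambda>u. insert u \<tau>) ` R"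
    proof
      fix \<sigma> assume "\<sigma> \<in> {\<sigma>\<in>F. card \<sigma> = d \<and> \<tau> \<subseteq> \<sigma>}"
      then have s: "\<sigma> \<in> F" "card \<sigma> = d" "\<tau> \<subseteq> \<sigma>" by auto
      have "card (\<sigma> - \<tau>) = 1" using s ctau finT by (simp add: card_Diff_subset)
      then obtain u where u: "\<sigma> - \<tau> = {u}" by (rule card_1_singletonE)
      then have "\<sigma> = insert u \<tau>" "u \<notin> \<tau>" using s(3) by auto
      then show "\<sigma> \<in> (\<lambda>u. insert u \<tau>) ` R" using s(1) unfolding star_rays_def by auto
    qed
    show "(\<lambda>u. insert u \<tau>) ` R \<subseteq> {\<sigma>\<in>F. card \<sigma> = d \<and> \<tau> \<subseteq> \<sigma>}"
      using RD ray_card by auto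
  qed
  have inj: "inj_on (\<lambda>u. insert u \<tau>) R"
  proof
    fix u v assume "u \<in> R" "v \<in> R" "insert u \<tau> = insert v \<tau>"
    then show "u = v" using RD by blast
  qed
  have "(\<Sum>\<sigma>\<in>{\<sigma>\<in>F. card \<sigma> = d \<and> \<tau> \<subseteq> \<sigma>}. the_elem (\<sigma> - \<tau>)) = (\<Sum>u\<in>R. the_elem (insert u \<tau> - \<tau>))"
    unfolding seq using sum.reindex[OF inj] by simp
  also have "\<dots> = \<Sum>R"
  proof (rule sum.cong)
    fix u assume "u \<in> R"
    then have "insert u \<tau> - \<tau> = {u}" using RD by auto
    then show "the_elem (insert u \<tau> - \<tau>) = u" by simp
  qed simp
  finally have eq: "(\<Sum>\<sigma>\<in>{\<sigma>\<in>F. card \<sigma> = d \<and> \<tau> \<subseteq> \<sigma>}. the_elem (\<sigma> - \<tau>)) = \<Sum>R" .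
  obtain B where "int_basis B" "\<tau> \<subseteq> B" using basis[OF tauF] by blast
  then show ?thesis unfolding eq using span_criterion sum_m_zero by blast
qed

end

theorem corollary3:
  fixes F :: "(real^'n) set set" and d :: nat and \<tau> :: "(real^'n) set"
  assumes "ehrhart_fan F" and "fan_dim F = d" and "\<tau> \<in> F" and "card \<tau> + 1 = d"
  shows "(\<Sum>\<sigma>\<in>{\<sigma>\<in>F. card \<sigma> = d \<and> \<tau> \<subseteq> \<sigma>}. the_elem (\<sigma> - \<tau>)) \<in> span \<tau>"
proof -
  obtain X where "unimodular_fan F" "\<forall>\<sigma>\<in>F. chi_ok F X \<sigma>" using assms(1) unfolding ehrhart_fan_def by blast
  then interpret setting F d \<tau> X using assms by unfold_locales auto
  show ?thesis by (rule main)
qed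

end
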